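(* Let $X$ be a connected bipartite graph with a unique perfect matching. Then for any assignment of nonzero real weights to the edges of $X$, no vertex of the resulting weighted graph is sedentary.
   Context: For a weighted graph with weighted adjacency matrix $A$ (entries equal to edge weights, $0$ for non-adjacent pairs), the transition matrix is $U(t)=e^{itA}$. A vertex $u$ is sedentary if $\inf_{t>0}|U(t)_{u,u}|\ge C$ for some constant $0<C\le1$, and not sedentary if $\inf_{t>0}|U(t)_{u,u}|=0$. *)

theory Defs
  imports "HOL-Analysis.Analysis"
begin

definition simple_graph :: "('n \<Rightarrow> 'n \<Rightarrow> bool) \<Rightarrow> bool" where
  "simple_graph E \<longleftrightarrow> (\<forall>u v. E u v \<longrightarrow> E v u) \<and> (\<forall>u. \<not> E u u)"

definition graph_connected :: "('n \<Rightarrow> 'n \<Rightarrow> bool) \<Rightarrow> bool" where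
  "graph_connected E \<longleftrightarrow> (\<forall>u v. E\<^sup>*\<^sup>* u v)"

definition bipartite :: "('n \<Rightarrow> 'n \<Rightarrow> bool) \<Rightarrow> bool" where
  "bipartite E \<longleftrightarrow> (\<exists>S. \<forall>u v. E u v \<longrightarrow> (u \<in> S \<longleftrightarrow> v \<notin> S))"

definition perfect_matching :: "('n \<Rightarrow> 'n \<Rightarrow> bool) \<Rightarrow> 'n set set \<Rightarrow> bool" where
  "perfect_matching E M \<longleftrightarrow>
     (\<forall>e\<in>M. \<exists>u v. e = {u, v} \<and> E u v) \<and> (\<forall>v. \<exists>!e. e \<in> M \<and> v \<in> e)"

definition unique_perfect_matching :: "('n \<Rightarrow> 'n \<Rightarrow> bool) \<Rightarrow> bool" where
  "unique_perfect_matching E \<longleftrightarrow> (\<exists>!M. perfect_matching E M)"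

definition weighted_adj :: "('n::finite \<Rightarrow> 'n \<Rightarrow> bool) \<Rightarrow> ('n set \<Rightarrow> real) \<Rightarrow> real^'n^'n" where
  "weighted_adj E w = (\<chi> u v. if E u v then w {u, v} else 0)"

primrec mat_pow :: "'a::comm_ring_1^'n^'n \<Rightarrow> nat \<Rightarrow> 'a^'n^'n" where
  "mat_pow A 0 = mat 1"
| "mat_pow A (Suc k) = A ** mat_pow A k"

definition mat_exp :: "complex^'n^'n \<Rightarrow> complex^'n^'n" where
  "mat_exp A = (\<chi> i j. \<Sum>k. (mat_pow A k) $ i $ j / of_nat (fact k))"

definition transition :: "real^'n^'n \<Rightarrow> real \<Rightarrow> complex^'n^'n" where
  "transition A t = mat_exp (\<chi> i j. \<i> * of_real t * of_real (A $ i $ j))"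

definition sedentary :: "real^'n^'n \<Rightarrow> 'n \<Rightarrow> bool" where
  "sedentary A u \<longleftrightarrow>
     (\<exists>C. 0 < C \<and> C \<le> 1 \<and> (INF t\<in>{0<..}. cmod (transition A t $ u $ u)) \<ge> C)"

end

theory Submission
  imports Defs
begin

lemma pm_from_perm:
  fixes E :: "'n \<Rightarrow> 'n \<Rightarrow> bool"
  assumes bip: "\<forall>u v. E u v \<longrightarrow> (u \<in> S \<longleftrightarrow> v \<notin> S)"
    and p: "p permutes UNIV" and pe: "\<forall>i. E i (p i)"
  shows "perfect_matching E {{i, p i} | i. i \<in> S}"
  unfolding perfect_matching_def
proof (intro conjI allI)
  show "\<forall>e\<in>{{i, p i} |i. i \<in> S}. \<exists>u v. e = {u, v} \<and> E u v" using pe by blast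
next
  fix v
  have bijp: "bij p" using p permutes_bij by blast
  show "\<exists>!e. e \<in> {{i, p i} |i. i \<in> S} \<and> v \<in> e"
  proof (cases "v \<in> S")
    case True
    show ?thesis
    proof (rule ex1I[of _ "{v, p v}"])
      show "{v, p v} \<in> {{i, p i} |i. i \<in> S} \<and> v \<in> {v, p v}" using True by blast
    next
      fix e assume "e \<in> {{i, p i} |i. i \<in> S} \<and> v \<in> e"
      then obtain i where i: "i \<in> S" "e = {i, p i}" "v \<in> e" by blast
      have "p i \<notin> S" using bip pe i(1) by blast
      then have "v = i" using i True by auto
      then show "e = {v, p v}" using i by simp
    qed
  next
    case False
    obtain i where pi: "p i = v" using bijp by (metis bij_pointE)
    have iS: "i \<in> S" using bip pe pi False by blast
    show ?thesis
    proof (rule ex1I[of _ "{i, v}"])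
      show "{i, v} \<in> {{i, p i} |i. i \<in> S} \<and> v \<in> {i, v}" using iS pi by blast
    next
      fix e assume "e \<in> {{i, p i} |i. i \<in> S} \<and> v \<in> e"
      then obtain j where j: "j \<in> S" "e = {j, p j}" "v \<in> e" by blast
      have "v \<noteq> j" using j False by auto
      then have "p j = v" using j by auto
      then have "j = i" using pi bijp by (metis bij_pointE)
      then show "e = {i, v}" using j pi by auto
    qed
  qed
qed

lemma pm_partner:
  fixes E :: "'n \<Rightarrow> 'n \<Rightarrow> bool"
  assumes sg: "simple_graph E" and pm: "perfect_matching E M"
  shows "{v, (SOME j. {v, j} \<in> M)} \<in> M"
    and "E v (SOME j. {v, j} \<in> M)"
    and "{v, j} \<in> M \<Longrightarrow> j = (SOME j. {v, j} \<in> M)"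
proof -
  have irr: "\<And>u. \<not> E u u" and sym: "\<And>u v. E u v \<Longrightarrow> E v u"
    using sg unfolding simple_graph_def by auto
  have edge: "\<And>e. e \<in> M \<Longrightarrow> \<exists>a b. e = {a, b} \<and> E a b"
    using pm unfolding perfect_matching_def by auto
  have uniq: "\<And>v. \<exists>!e. e \<in> M \<and> v \<in> e" using pm unfolding perfect_matching_def by auto
  have ex: "\<exists>j. {v, j} \<in> M \<and> E v j"
  proof -
    obtain e where e: "e \<in> M" "v \<in> e" using uniq by blast
    obtain a b where ab: "e = {a, b}" "E a b" using edge e(1) by blast
    show ?thesis
    proof (cases "v = a")
      case True then show ?thesis using e ab by auto
    next
      case False then have "v = b" using e ab by auto
      then show ?thesis using e ab sym by (auto simp: insert_commute)
    qed
  qed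
  have gen: "\<And>j. {v, j} \<in> M \<Longrightarrow> E v j"
  proof -
    fix j assume j: "{v, j} \<in> M"
    obtain a b where ab: "{v, j} = {a, b}" "E a b" using edge j by blast
    then have "a \<noteq> b" using irr by auto
    then show "E v j" using ab sym by (metis doubleton_eq_iff)
  qed
  show 1: "{v, (SOME j. {v, j} \<in> M)} \<in> M" using ex by (metis (mono_tags, lifting) someI_ex)
  show "E v (SOME j. {v, j} \<in> M)" using gen[OF 1] .
  assume j: "{v, j} \<in> M"
  have "{v, j} = {v, (SOME j. {v, j} \<in> M)}" using uniq[of v] j 1 by blast
  moreover have "j \<noteq> v" using gen[OF j] irr by auto
  moreover have "(SOME j. {v, j} \<in> M) \<noteq> v" using gen[OF 1] irr by auto
  ultimately show "j = (SOME j. {v, j} \<in> M)" by (metis doubleton_eq_iff)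
qed

lemma det_nonzero:
  fixes E :: "'n::finite \<Rightarrow> 'n \<Rightarrow> bool" and w :: "'n set \<Rightarrow> real"
  assumes sg: "simple_graph E" and bip: "bipartite E"
    and upm: "unique_perfect_matching E"
    and wnz: "\<forall>u v. E u v \<longrightarrow> w {u, v} \<noteq> 0"
  shows "det (weighted_adj E w) \<noteq> 0"
proof -
  obtain M where pm: "perfect_matching E M" and Mu: "\<And>M'. perfect_matching E M' \<Longrightarrow> M' = M"
    using upm unfolding unique_perfect_matching_def by blast
  obtain S where S: "\<forall>u v. E u v \<longrightarrow> (u \<in> S \<longleftrightarrow> v \<notin> S)" using bip unfolding bipartite_def by blast
  have S': "\<forall>u v. E u v \<longrightarrow> (u \<in> -S \<longleftrightarrow> v \<notin> -S)" using S by auto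
  define mu where "mu v = (SOME j. {v, j} \<in> M)" for v
  have mu1: "{v, mu v} \<in> M" and mu2: "E v (mu v)" and mu3: "{v, j} \<in> M \<Longrightarrow> j = mu v" for v j
    using pm_partner[OF sg pm] unfolding mu_def by auto
  have mumu: "mu (mu v) = v" for v
    using mu1[of v] mu3[of "mu v" v] by (simp add: insert_commute)
  have muperm: "mu permutes UNIV"
    unfolding permutes_def
  proof (intro conjI allI)
    fix y show "\<exists>!x. mu x = y" by (rule ex1I[of _ "mu y"]) (use mumu in metis)+
  qed simp
  have key: "p = mu" if p: "p permutes UNIV" and pe: "\<forall>i. E i (p i)" for p
  proof
    fix i
    have 1: "{{i, p i} | i. i \<in> S} = M" using Mu pm_from_perm[OF S p pe] by blast
    have 2: "{{i, p i} | i. i \<in> -S} = M" using Mu pm_from_perm[OF S' p pe] by blast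
    have "{i, p i} \<in> M" using 1 2 by (cases "i \<in> S") auto
    then show "p i = mu i" using mu3 by blast
  qed
  let ?A = "weighted_adj E w"
  let ?t = "\<lambda>p. of_int (sign p) * (\<Prod>i\<in>UNIV. ?A $ i $ p i)"
  have zero: "?t p = 0" if "p \<in> {p. p permutes UNIV} - {mu}" for p
  proof -
    have "\<not> (\<forall>i. E i (p i))" using key that by blast
    then obtain i where "\<not> E i (p i)" by blast
    then have "?A $ i $ p i = 0" unfolding weighted_adj_def by simp
    then show ?thesis by (simp add: prod_zero_iff) (metis UNIV_I)
  qed
  have "det ?A = ?t mu"
    unfolding det_def
  proof -
    have "(\<Sum>p\<in>{p. p permutes UNIV} - {mu}. ?t p) = 0" by (rule sum.neutral) (use zero in blast)
    then show "(\<Sum>p\<in>{p. p permutes UNIV}. ?t p) = ?t mu"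
      by (subst sum.remove[of _ mu]) (use muperm in auto)
  qed
  moreover have "?t mu \<noteq> 0"
    using mu2 wnz by (simp add: weighted_adj_def sign_def)
  ultimately show ?thesis by simp
qed


definition coef :: "real^'n^'n \<Rightarrow> 'n \<Rightarrow> 'n \<Rightarrow> nat \<Rightarrow> complex" where
  "coef A a b k = of_real (mat_pow A k $ a $ b) / of_nat (fact k)"

definition FF :: "real^'n^'n \<Rightarrow> 'n \<Rightarrow> 'n \<Rightarrow> complex \<Rightarrow> complex" where
  "FF A a b z = (\<Sum>k. coef A a b k * z ^ k)"

lemma mat_pow_scaled:
  fixes A :: "real^'n::finite^'n"
  shows "mat_pow (\<chi> i j. c * of_real (A $ i $ j)) k = (\<chi> a b. c ^ k * of_real (mat_pow A k $ a $ b))"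
proof (induction k)
  case 0
  then show ?case by (simp add: vec_eq_iff mat_def)
next
  case (Suc k)
  show ?case
    by (simp add: Suc vec_eq_iff matrix_matrix_mult_def sum_distrib_left algebra_simps)
qed

lemma transition_eq:
  fixes A :: "real^'n::finite^'n"
  shows "transition A t $ a $ b = FF A a b (\<i> * of_real t)"
  unfolding transition_def mat_exp_def FF_def coef_def
  by (simp add: mat_pow_scaled mult.commute)

lemma mat_pow_comm:
  fixes A :: "'a::comm_ring_1^'n::finite^'n"
  shows "mat_pow A k ** A = A ** mat_pow A k"
proof (induction k)
  case (Suc k)
  then show ?case by (metis matrix_mul_assoc mat_pow.simps(2))
qed simp

lemma mat_pow_bound:
  fixes A :: "real^'n::finite^'n"
  shows "\<bar>mat_pow A k $ a $ b\<bar> \<le> (\<Sum>i\<in>UNIV. \<Sum>j\<in>UNIV. \<bar>A $ i $ j\<bar>) ^ k"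
proof (induction k arbitrary: a b)
  case 0
  show ?case by (simp add: mat_def)
next
  case (Suc k)
  let ?c = "\<Sum>i\<in>UNIV. \<Sum>j\<in>UNIV. \<bar>A $ i $ j\<bar>"
  have "\<bar>mat_pow A (Suc k) $ a $ b\<bar> = \<bar>\<Sum>v\<in>UNIV. A $ a $ v * mat_pow A k $ v $ b\<bar>"
    by (simp add: matrix_matrix_mult_def)
  also have "\<dots> \<le> (\<Sum>v\<in>UNIV. \<bar>A $ a $ v\<bar> * ?c ^ k)"
    by (rule order_trans[OF sum_abs]) (auto intro!: sum_mono mult_left_mono Suc simp: abs_mult)
  also have "\<dots> = (\<Sum>v\<in>UNIV. \<bar>A $ a $ v\<bar>) * ?c ^ k" by (simp add: sum_distrib_right)
  also have "(\<Sum>v\<in>UNIV. \<bar>A $ a $ v\<bar>) \<le> ?c"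
    by (rule member_le_sum[where f="\<lambda>i. \<Sum>j\<in>UNIV. \<bar>A $ i $ j\<bar>"]) auto
  then have "(\<Sum>v\<in>UNIV. \<bar>A $ a $ v\<bar>) * ?c ^ k \<le> ?c * ?c ^ k"
    by (rule mult_right_mono) (auto intro: zero_le_power sum_nonneg)
  finally show ?case by simp
qed

lemma summable_coef:
  fixes A :: "real^'n::finite^'n"
  shows "summable (\<lambda>k. coef A a b k * z ^ k)"
proof -
  let ?c = "\<Sum>i\<in>UNIV. \<Sum>j\<in>UNIV. \<bar>A $ i $ j\<bar>"
  have se: "summable (\<lambda>k. inverse (fact k) * (?c * norm z) ^ k)" by (rule summable_exp)
  have bd: "norm (norm (coef A a b k * z ^ k)) \<le> inverse (fact k) * (?c * norm z) ^ k" for k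
  proof -
    have "norm (coef A a b k * z ^ k) = \<bar>mat_pow A k $ a $ b\<bar> / fact k * norm z ^ k"
      by (simp add: coef_def norm_mult norm_divide norm_power)
    also have "\<dots> \<le> ?c ^ k / fact k * norm z ^ k"
      by (intro mult_right_mono divide_right_mono mat_pow_bound) auto
    also have "\<dots> = inverse (fact k) * (?c * norm z) ^ k"
      by (simp add: power_mult_distrib field_simps)
    finally show "norm (norm (coef A a b k * z ^ k)) \<le> inverse (fact k) * (?c * norm z) ^ k" by simp
  qed
  have "summable (\<lambda>k. norm (coef A a b k * z ^ k))"
    by (rule summable_comparison_test'[OF se bd])
  then show ?thesis by (rule summable_norm_cancel)
qed

lemma diffs_coef:
  fixes A :: "real^'n::finite^'n"
  shows "diffs (coef A a b) n = (\<Sum>v\<in>UNIV. of_real (A $ a $ v) * coef A v b n)"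
    and "diffs (coef A a b) n = (\<Sum>v\<in>UNIV. coef A a v n * of_real (A $ v $ b))"
proof -
  have f: "(of_nat (Suc n) :: complex) / of_nat (fact (Suc n)) = 1 / of_nat (fact n)"
  proof -
    have "(of_nat (fact (Suc n)) :: complex) = of_nat (Suc n) * of_nat (fact n)"
      by (simp only: fact_Suc of_nat_mult of_nat_id)
    then show ?thesis by (simp del: of_nat_Suc)
  qed
  have "diffs (coef A a b) n = of_real (mat_pow A (Suc n) $ a $ b) * (of_nat (Suc n) / of_nat (fact (Suc n)))"
    unfolding diffs_def coef_def by (simp add: field_simps del: of_nat_Suc)
  also have "\<dots> = of_real (mat_pow A (Suc n) $ a $ b) / of_nat (fact n)"
    by (simp only: f) simp
  finally have D: "diffs (coef A a b) n = of_real (mat_pow A (Suc n) $ a $ b) / of_nat (fact n)" .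
  also have "\<dots> = (\<Sum>v\<in>UNIV. of_real (A $ a $ v) * coef A v b n)"
    by (simp add: coef_def matrix_matrix_mult_def sum_divide_distrib)
  finally show "diffs (coef A a b) n = (\<Sum>v\<in>UNIV. of_real (A $ a $ v) * coef A v b n)" .
  have "mat_pow A (Suc n) $ a $ b = (mat_pow A n ** A) $ a $ b" by (simp add: mat_pow_comm)
  then have "of_real (mat_pow A (Suc n) $ a $ b) / of_nat (fact n) = (\<Sum>v\<in>UNIV. coef A a v n * of_real (A $ v $ b))"
    by (simp add: coef_def matrix_matrix_mult_def sum_divide_distrib)
  with D show "diffs (coef A a b) n = (\<Sum>v\<in>UNIV. coef A a v n * of_real (A $ v $ b))"
    by simp
qed

lemma FF_diffs:
  fixes A :: "real^'n::finite^'n"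
  shows "(\<Sum>n. diffs (coef A a b) n * z ^ n) = (\<Sum>v\<in>UNIV. of_real (A $ a $ v) * FF A v b z)"
    and "(\<Sum>n. diffs (coef A a b) n * z ^ n) = (\<Sum>v\<in>UNIV. FF A a v z * of_real (A $ v $ b))"
proof -
  have "(\<Sum>n. diffs (coef A a b) n * z ^ n) = (\<Sum>n. \<Sum>v\<in>UNIV. of_real (A $ a $ v) * (coef A v b n * z ^ n))"
    by (simp add: diffs_coef(1) sum_distrib_right mult.assoc)
  also have "\<dots> = (\<Sum>v\<in>UNIV. \<Sum>n. of_real (A $ a $ v) * (coef A v b n * z ^ n))"
    by (rule suminf_sum) (intro summable_mult summable_coef)
  also have "\<dots> = (\<Sum>v\<in>UNIV. of_real (A $ a $ v) * FF A v b z)"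
    unfolding FF_def by (intro sum.cong refl suminf_mult summable_coef)
  finally show "(\<Sum>n. diffs (coef A a b) n * z ^ n) = (\<Sum>v\<in>UNIV. of_real (A $ a $ v) * FF A v b z)" .
  have "(\<Sum>n. diffs (coef A a b) n * z ^ n) = (\<Sum>n. \<Sum>v\<in>UNIV. (coef A a v n * z ^ n) * of_real (A $ v $ b))"
    by (simp add: diffs_coef(2) sum_distrib_right sum_distrib_left mult_ac)
  also have "\<dots> = (\<Sum>v\<in>UNIV. \<Sum>n. (coef A a v n * z ^ n) * of_real (A $ v $ b))"
    by (rule suminf_sum) (intro summable_mult2 summable_coef)
  also have "\<dots> = (\<Sum>v\<in>UNIV. FF A a v z * of_real (A $ v $ b))"
    unfolding FF_def by (intro sum.cong refl suminf_mult2[symmetric] summable_coef)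
  finally show "(\<Sum>n. diffs (coef A a b) n * z ^ n) = (\<Sum>v\<in>UNIV. FF A a v z * of_real (A $ v $ b))" .
qed

lemma FF_comm:
  fixes A :: "real^'n::finite^'n"
  shows "(\<Sum>v\<in>UNIV. of_real (A $ a $ v) * FF A v b z) = (\<Sum>v\<in>UNIV. FF A a v z * of_real (A $ v $ b))"
  using FF_diffs[of A a b z] by simp

lemma FF_deriv:
  fixes A :: "real^'n::finite^'n"
  shows "(FF A a b has_field_derivative (\<Sum>v\<in>UNIV. of_real (A $ a $ v) * FF A v b z)) (at z)"
proof -
  have "((\<lambda>z. \<Sum>n. coef A a b n * z ^ n) has_field_derivative (\<Sum>n. diffs (coef A a b) n * z ^ n)) (at z)"
    by (rule termdiffs_strong_converges_everywhere) (rule summable_coef)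
  moreover have "FF A a b = (\<lambda>z. \<Sum>n. coef A a b n * z ^ n)" by (simp add: fun_eq_iff FF_def)
  ultimately have "(FF A a b has_field_derivative (\<Sum>n. diffs (coef A a b) n * z ^ n)) (at z)" by simp
  then show ?thesis by (simp only: FF_diffs(1))
qed

lemma FF_zero:
  fixes A :: "real^'n::finite^'n"
  shows "FF A a b 0 = (if a = b then 1 else 0)"
  unfolding FF_def using powser_zero[of "coef A a b"] by (simp add: coef_def mat_def)

lemma FF_group:
  fixes A :: "real^'n::finite^'n"
  shows "(\<Sum>v\<in>UNIV. FF A a v (z + w) * FF A v b (- z)) = FF A a b w"
proof -
  define V where "V z = (\<Sum>v\<in>UNIV. FF A a v (z + w) * FF A v b (- z))" for z
  have d: "(V has_field_derivative 0) (at z within UNIV)" for z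
  proof -
    have d1: "((\<lambda>z. FF A a v (z + w)) has_field_derivative (\<Sum>x\<in>UNIV. of_real (A $ a $ x) * FF A x v (z + w))) (at z)" for v
    proof -
      have "((\<lambda>z. z + w) has_field_derivative 1) (at z)" by (auto intro!: derivative_eq_intros)
      from DERIV_chain2[where f="FF A a v" and g="\<lambda>z. z + w", OF FF_deriv[of A a v "z + w"] this]
      show ?thesis by simp
    qed
    have d2: "((\<lambda>z. FF A v b (- z)) has_field_derivative - (\<Sum>x\<in>UNIV. of_real (A $ v $ x) * FF A x b (- z))) (at z)" for v
    proof -
      have "((\<lambda>z. - z) has_field_derivative -1) (at z)" by (auto intro!: derivative_eq_intros)
      from DERIV_chain2[where f="FF A v b" and g="\<lambda>z. - z", OF FF_deriv[of A v b "- z"] this]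
      show ?thesis by simp
    qed
    have "(V has_field_derivative (\<Sum>v\<in>UNIV. (\<Sum>x\<in>UNIV. of_real (A $ a $ x) * FF A x v (z + w)) * FF A v b (- z)
        + FF A a v (z + w) * - (\<Sum>x\<in>UNIV. of_real (A $ v $ x) * FF A x b (- z)))) (at z)"
      unfolding V_def[abs_def]
      by (intro DERIV_sum) (use DERIV_mult'[OF d1 d2] in \<open>simp add: add.commute\<close>)
    moreover have "(\<Sum>v\<in>UNIV. (\<Sum>x\<in>UNIV. of_real (A $ a $ x) * FF A x v (z + w)) * FF A v b (- z)
        + FF A a v (z + w) * - (\<Sum>x\<in>UNIV. of_real (A $ v $ x) * FF A x b (- z))) = 0"
    proof -
      have "(\<Sum>v\<in>UNIV. (\<Sum>x\<in>UNIV. of_real (A $ a $ x) * FF A x v (z + w)) * FF A v b (- z))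
          = (\<Sum>v\<in>UNIV. \<Sum>x\<in>UNIV. FF A a x (z + w) * of_real (A $ x $ v) * FF A v b (- z))"
        by (simp add: FF_comm sum_distrib_right)
      also have "\<dots> = (\<Sum>x\<in>UNIV. \<Sum>v\<in>UNIV. FF A a x (z + w) * of_real (A $ x $ v) * FF A v b (- z))"
        by (rule sum.swap)
      also have "\<dots> = (\<Sum>v\<in>UNIV. FF A a v (z + w) * (\<Sum>x\<in>UNIV. of_real (A $ v $ x) * FF A x b (- z)))"
        by (simp add: sum_distrib_left mult.assoc)
      finally show ?thesis by (simp add: sum_subtractf)
    qed
    ultimately show ?thesis by simp
  qed
  obtain c where "\<forall>x\<in>UNIV. V x = c"
    using has_field_derivative_zero_constant[of UNIV V] d by auto
  then have "V z = V 0" by simp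
  also have "V 0 = FF A a b w"
    unfolding V_def by (simp add: FF_zero if_distrib cong: if_cong)
  finally show ?thesis unfolding V_def .
qed


lemma mat_pow_sym:
  fixes A :: "real^'n::finite^'n"
  assumes sym: "\<And>i j. A $ i $ j = A $ j $ i"
  shows "mat_pow A k $ a $ b = mat_pow A k $ b $ a"
proof (induction k arbitrary: a b)
  case 0 then show ?case by (simp add: mat_def)
next
  case (Suc k)
  have "mat_pow A (Suc k) $ a $ b = (\<Sum>v\<in>UNIV. A $ a $ v * mat_pow A k $ v $ b)"
    by (simp add: matrix_matrix_mult_def)
  also have "\<dots> = (\<Sum>v\<in>UNIV. mat_pow A k $ b $ v * A $ v $ a)"
    using Suc sym by (simp add: mult.commute)
  also have "\<dots> = (mat_pow A k ** A) $ b $ a" by (simp add: matrix_matrix_mult_def)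
  also have "\<dots> = mat_pow A (Suc k) $ b $ a" by (simp add: mat_pow_comm)
  finally show ?case .
qed

lemma FF_cnj:
  fixes A :: "real^'n::finite^'n"
  shows "cnj (FF A a b z) = FF A a b (cnj z)"
proof -
  have "(\<lambda>k. coef A a b k * z ^ k) sums FF A a b z"
    unfolding FF_def by (rule summable_sums[OF summable_coef])
  then have "(\<lambda>k. cnj (coef A a b k * z ^ k)) sums cnj (FF A a b z)"
    by (simp only: sums_cnj)
  moreover have "(\<lambda>k. cnj (coef A a b k * z ^ k)) = (\<lambda>k. coef A a b k * cnj z ^ k)"
  proof
    fix k
    have "cnj (coef A a b k) = coef A a b k" by (simp add: coef_def)
    then show "cnj (coef A a b k * z ^ k) = coef A a b k * cnj z ^ k" by simp
  qed
  ultimately have "(\<lambda>k. coef A a b k * cnj z ^ k) sums cnj (FF A a b z)" by simp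
  then show ?thesis unfolding FF_def by (simp add: sums_iff)
qed

lemma FF_sym:
  fixes A :: "real^'n::finite^'n"
  assumes sym: "\<And>i j. A $ i $ j = A $ j $ i"
  shows "FF A a b z = FF A b a z"
  unfolding FF_def coef_def using mat_pow_sym[OF sym] by simp

lemma FF_unitary:
  fixes A :: "real^'n::finite^'n"
  assumes sym: "\<And>i j. A $ i $ j = A $ j $ i"
  shows "norm (FF A a b (\<i> * of_real t)) \<le> 1"
proof -
  let ?z = "\<i> * of_real t"
  have "(\<Sum>v\<in>UNIV. FF A a v (?z + 0) * FF A v a (- ?z)) = FF A a a 0" by (rule FF_group)
  moreover have "FF A v a (- ?z) = cnj (FF A a v ?z)" for v
    using FF_sym[OF sym, of v a] FF_cnj[of A a v ?z] by simp
  ultimately have "(\<Sum>v\<in>UNIV. FF A a v ?z * cnj (FF A a v ?z)) = 1" by (simp add: FF_zero)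
  moreover have eq: "x * cnj x = complex_of_real ((norm x)\<^sup>2)" for x
    using complex_norm_square[of x] by simp
  ultimately have "(\<Sum>v\<in>UNIV. complex_of_real ((norm (FF A a v ?z))\<^sup>2)) = 1"
    by (simp only: eq)
  then have s: "(\<Sum>v\<in>UNIV. (norm (FF A a v ?z))\<^sup>2) = 1"
    by (metis of_real_eq_1_iff of_real_sum)
  have "(norm (FF A a b ?z))\<^sup>2 \<le> (\<Sum>v\<in>UNIV. (norm (FF A a v ?z))\<^sup>2)"
    by (rule member_le_sum) auto
  then have "(norm (FF A a b ?z))\<^sup>2 \<le> 1" using s by simp
  then show ?thesis by (simp add: power_le_one_iff abs_le_square_iff)
qed

lemma mat_pow_bip:
  fixes A :: "real^'n::finite^'n"
  assumes bip: "\<And>i j. A $ i $ j \<noteq> 0 \<Longrightarrow> (i \<in> S \<longleftrightarrow> j \<notin> S)"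
  shows "mat_pow A k $ a $ b \<noteq> 0 \<Longrightarrow> ((a \<in> S \<longleftrightarrow> b \<in> S) \<longleftrightarrow> even k)"
proof (induction k arbitrary: a)
  case 0 then show ?case by (auto simp: mat_def split: if_splits)
next
  case (Suc k)
  have "(\<Sum>v\<in>UNIV. A $ a $ v * mat_pow A k $ v $ b) \<noteq> 0"
    using Suc.prems by (simp add: matrix_matrix_mult_def)
  then obtain v where v: "A $ a $ v * mat_pow A k $ v $ b \<noteq> 0"
    by (meson sum.neutral)
  then have "A $ a $ v \<noteq> 0" "mat_pow A k $ v $ b \<noteq> 0" by auto
  with Suc.IH[of v] bip show ?case by auto
qed

lemma FF_diag_real:
  fixes A :: "real^'n::finite^'n"
  assumes sym: "\<And>i j. A $ i $ j = A $ j $ i"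
    and bip: "\<And>i j. A $ i $ j \<noteq> 0 \<Longrightarrow> (i \<in> S \<longleftrightarrow> j \<notin> S)"
  shows "FF A u u (\<i> * of_real t) = of_real (Re (FF A u u (\<i> * of_real t)))"
proof -
  have c: "coef A u u k * (- z) ^ k = coef A u u k * z ^ k" for k z
  proof (cases "even k")
    case False
    then have "mat_pow A k $ u $ u = 0" using mat_pow_bip[OF bip, where k=k and a=u and b=u] by auto
    then show ?thesis by (simp add: coef_def)
  qed simp
  have ev: "FF A u u (- z) = FF A u u z" for z unfolding FF_def by (simp only: c)
  have "cnj (FF A u u (\<i> * of_real t)) = FF A u u (\<i> * of_real t)"
    using FF_cnj[of A u u "\<i> * of_real t"] ev[of "\<i> * of_real t"] by simp
  then have "Im (FF A u u (\<i> * of_real t)) = 0" by (metis complex.sel(2) complex_cnj neg_equal_zero complex_surj)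
  then show ?thesis by (simp add: complex_eq_iff)
qed


lemma vec_norm_le_sum:
  fixes x :: "'a::real_normed_vector^'n::finite"
  shows "norm x \<le> (\<Sum>i\<in>UNIV. norm (x $ i))"
  unfolding norm_vec_def by (rule L2_set_le_sum) simp

lemma core:
  fixes A :: "real^'n::finite^'n"
  assumes sym: "\<And>i j. A $ i $ j = A $ j $ i"
    and bip: "\<And>i j. A $ i $ j \<noteq> 0 \<Longrightarrow> (i \<in> S \<longleftrightarrow> j \<notin> S)"
    and AB: "A ** B = mat 1"
  shows "\<not> sedentary A u"
proof
  assume "sedentary A u"
  then obtain C where C: "0 < C" "C \<le> (INF t\<in>{0<..}. cmod (transition A t $ u $ u))"
    unfolding sedentary_def by auto
  define g where "g t = Re (FF A u u (\<i> * of_real t))" for t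
  have FFg: "FF A u u (\<i> * of_real t) = of_real (g t)" for t
    unfolding g_def by (rule FF_diag_real[OF sym bip])
  have gC: "C \<le> \<bar>g t\<bar>" if "t > 0" for t
  proof -
    have "bdd_below ((\<lambda>t. cmod (transition A t $ u $ u)) ` {0<..})"
      by (rule bdd_belowI[of _ 0]) auto
    then have "(INF t\<in>{0<..}. cmod (transition A t $ u $ u)) \<le> cmod (transition A t $ u $ u)"
      by (rule cINF_lower) (use that in auto)
    then show ?thesis using C(2) by (simp add: transition_eq FFg)
  qed
  have g0: "g 0 = 1" unfolding g_def by (simp add: FF_zero)
  have FFcont: "isCont (FF A a b) z" for a b z by (rule DERIV_isCont[OF FF_deriv])
  have gcont: "isCont g t" for t
  proof -
    have "isCont (\<lambda>t. \<i> * complex_of_real t) t" by (intro continuous_intros)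
    from isCont_o2[OF this FFcont[where a=u and b=u]] show ?thesis unfolding g_def by (rule isCont_Re)
  qed
  have gpos: "g t > 0" if tpos: "t > 0" for t
  proof (rule ccontr)
    assume "\<not> g t > 0"
    then have "g t \<le> 0" by simp
    moreover have "continuous_on {0..t} g" using gcont by (simp add: continuous_at_imp_continuous_on)
    ultimately obtain x where x: "0 \<le> x" "x \<le> t" "g x = 0"
      using IVT2'[of g t 0 0] g0 tpos by auto
    then have "x \<noteq> 0" using g0 by auto
    then show False using gC[of x] x C(1) by auto
  qed
  define x where "x v = complex_of_real (B $ v $ u)" for v
  define H where "H z = (\<Sum>v\<in>UNIV. FF A u v z * x v)" for z
  have Ax: "(\<Sum>v\<in>UNIV. of_real (A $ y $ v) * x v) = (if y = u then 1 else 0)" for y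
  proof -
    have "(A ** B) $ y $ u = (if y = u then 1 else 0)" using AB by (simp add: mat_def)
    then have "(\<Sum>v\<in>UNIV. A $ y $ v * B $ v $ u) = (if y = u then 1 else 0)"
      by (simp add: matrix_matrix_mult_def)
    then have "complex_of_real (\<Sum>v\<in>UNIV. A $ y $ v * B $ v $ u) = (if y = u then 1 else 0)"
      by simp
    then show ?thesis unfolding x_def by (simp add: of_real_sum)
  qed
  have Hd: "(H has_field_derivative FF A u u z) (at z)" for z
  proof -
    have "(H has_field_derivative (\<Sum>v\<in>UNIV. (\<Sum>y\<in>UNIV. of_real (A $ u $ y) * FF A y v z) * x v)) (at z)"
      unfolding H_def[abs_def] by (intro DERIV_sum DERIV_cmult_right FF_deriv)
    moreover have "(\<Sum>v\<in>UNIV. (\<Sum>y\<in>UNIV. of_real (A $ u $ y) * FF A y v z) * x v) = FF A u u z"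
    proof -
      have "(\<Sum>v\<in>UNIV. (\<Sum>y\<in>UNIV. of_real (A $ u $ y) * FF A y v z) * x v)
          = (\<Sum>v\<in>UNIV. \<Sum>y\<in>UNIV. FF A u y z * of_real (A $ y $ v) * x v)"
        by (simp add: FF_comm sum_distrib_right)
      also have "\<dots> = (\<Sum>y\<in>UNIV. \<Sum>v\<in>UNIV. FF A u y z * of_real (A $ y $ v) * x v)"
        by (rule sum.swap)
      also have "\<dots> = (\<Sum>y\<in>UNIV. FF A u y z * (\<Sum>v\<in>UNIV. of_real (A $ y $ v) * x v))"
        by (simp add: sum_distrib_left mult.assoc)
      also have "\<dots> = FF A u u z" by (simp add: Ax if_distrib cong: if_cong)
      finally show ?thesis .
    qed
    ultimately show ?thesis by simp
  qed
  define G where "G t = Im (H (\<i> * of_real t))" for t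
  have Gd: "(G has_real_derivative g t) (at t)" for t
  proof -
    have k: "((\<lambda>t. \<i> * complex_of_real t) has_vector_derivative \<i>) (at t)"
      by (auto intro!: derivative_eq_intros)
    have "((H \<circ> (\<lambda>t. \<i> * complex_of_real t)) has_vector_derivative \<i> * FF A u u (\<i> * of_real t)) (at t)"
      by (rule field_vector_diff_chain_at[OF k Hd])
    from bounded_linear.has_vector_derivative[OF bounded_linear_Im this]
    have "((\<lambda>t. Im (H (\<i> * of_real t))) has_vector_derivative g t) (at t)"
      by (simp add: FFg)
    then show ?thesis unfolding G_def[abs_def] by (simp add: has_real_derivative_iff_has_vector_derivative)
  qed
  have gpos': "g t > 0" if "t \<ge> 0" for t
    using gpos g0 that by (cases "t = 0") auto
  have Gmono: "G a < G b" if ab: "0 \<le> a" "a < b" for a b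
  proof (rule DERIV_pos_imp_increasing[OF ab(2)])
    fix t assume "a \<le> t" "t \<le> b"
    then show "\<exists>y. (G has_real_derivative y) (at t) \<and> 0 < y"
      using Gd[of t] gpos'[of t] ab(1) by auto
  qed
  define c where "c = G 1 - G 0"
  have cpos: "c > 0" unfolding c_def using Gmono[of 0 1] by simp
  have GT: "G T - G 0 \<ge> c" if "T \<ge> 1" for T
    using Gmono[of 1 T] that unfolding c_def by (cases "T = 1") auto
  define U where "U k = (\<chi> a b. FF A a b (\<i> * of_real (real k)))" for k :: nat
  have Ub: "norm (FF A a b (\<i> * of_real t)) \<le> 1" for a b t by (rule FF_unitary[OF sym])
  have "bounded (range U)"
    unfolding bounded_iff
  proof (intro exI ballI)
    fix y assume "y \<in> range U"
    then obtain k where y: "y = U k" by blast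
    have "norm y \<le> (\<Sum>a\<in>UNIV. norm (y $ a))" by (rule vec_norm_le_sum)
    also have "\<dots> \<le> (\<Sum>a\<in>(UNIV::'n set). \<Sum>b\<in>(UNIV::'n set). 1)"
    proof (rule sum_mono)
      fix a
      have "norm (y $ a) \<le> (\<Sum>b\<in>UNIV. norm (y $ a $ b))" by (rule vec_norm_le_sum)
      also have "\<dots> \<le> (\<Sum>b\<in>(UNIV::'n set). 1)"
        by (rule sum_mono) (use Ub[where a=a and t="real k"] in \<open>simp add: y U_def\<close>)
      finally show "norm (y $ a) \<le> (\<Sum>b\<in>(UNIV::'n set). 1)" .
    qed
    finally show "norm y \<le> (\<Sum>a\<in>(UNIV::'n set). \<Sum>b\<in>(UNIV::'n set). 1::real)" .
  qed
  then obtain l r where r: "strict_mono r" and lim: "(U \<circ> r) \<longlonglongrightarrow> l"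
    using bounded_imp_convergent_subsequence by blast
  have cau: "Cauchy (U \<circ> r)" using lim by (rule LIMSEQ_imp_Cauchy)
  define X where "X = (\<Sum>b\<in>UNIV. norm (x b))"
  define N where "N = real CARD('n)"
  have Npos: "N > 0" unfolding N_def by simp
  have Xnn: "X \<ge> 0" unfolding X_def by (simp add: sum_nonneg)
  define \<delta> where "\<delta> = c / (N * (X + 1))"
  have dpos: "\<delta> > 0" unfolding \<delta>_def using cpos Npos Xnn by simp
  obtain M where M: "\<forall>m\<ge>M. \<forall>n\<ge>M. dist ((U \<circ> r) m) ((U \<circ> r) n) < \<delta>"
    using cau dpos unfolding Cauchy_def by blast
  define m where "m = r (Suc M)"
  define n where "n = r M"
  have nm: "n < m" unfolding m_def n_def using r by (simp add: strict_monoD)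
  have dmn: "norm (U m - U n) < \<delta>" using M[rule_format, of "Suc M" M] unfolding m_def n_def
    by (simp add: dist_norm)
  have D: "norm (FF A a b (\<i> * of_real (real m)) - FF A a b (\<i> * of_real (real n))) < \<delta>" for a b
  proof -
    have "norm ((U m - U n) $ a $ b) \<le> norm ((U m - U n) $ a)" by (rule Finite_Cartesian_Product.norm_nth_le)
    also have "\<dots> \<le> norm (U m - U n)" by (rule Finite_Cartesian_Product.norm_nth_le)
    finally show ?thesis using dmn by (simp add: U_def)
  qed
  define T where "T = real m - real n"
  have T1: "T \<ge> 1" unfolding T_def using nm by simp
  have grp: "FF A a b (\<i> * of_real T) - FF A a b 0
      = (\<Sum>v\<in>UNIV. (FF A a v (\<i> * of_real (real m)) - FF A a v (\<i> * of_real (real n))) * FF A v b (- (\<i> * of_real (real n))))" for a b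
  proof -
    have e: "\<i> * of_real (real n) + \<i> * of_real T = \<i> * of_real (real m)"
      unfolding T_def by (simp add: algebra_simps)
    have 1: "(\<Sum>v\<in>UNIV. FF A a v (\<i> * of_real (real m)) * FF A v b (- (\<i> * of_real (real n)))) = FF A a b (\<i> * of_real T)"
      using FF_group[of A a "\<i> * of_real (real n)" "\<i> * of_real T" b] by (simp only: e)
    have 2: "(\<Sum>v\<in>UNIV. FF A a v (\<i> * of_real (real n)) * FF A v b (- (\<i> * of_real (real n)))) = FF A a b 0"
      using FF_group[of A a "\<i> * of_real (real n)" 0 b] by simp
    show ?thesis by (simp add: 1[symmetric] 2[symmetric] sum_subtractf left_diff_distrib)
  qed
  have Hdiff: "H (\<i> * of_real T) - H 0 = (\<Sum>b\<in>UNIV. (FF A u b (\<i> * of_real T) - FF A u b 0) * x b)"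
    unfolding H_def by (simp add: sum_subtractf left_diff_distrib)
  have "norm (H (\<i> * of_real T) - H 0) \<le> (\<Sum>b\<in>UNIV. N * \<delta> * norm (x b))"
    unfolding Hdiff
  proof (rule order_trans[OF norm_sum sum_mono])
    fix b
    have "norm (FF A u b (\<i> * of_real T) - FF A u b 0) \<le> (\<Sum>v\<in>(UNIV::'n set). \<delta>)"
      unfolding grp
    proof (rule order_trans[OF norm_sum sum_mono])
      fix v
      have nb: "norm (FF A v b (- (\<i> * of_real (real n)))) \<le> 1"
        using Ub[where a=v and b=b and t="- real n"] by simp
      show "norm ((FF A u v (\<i> * of_real (real m)) - FF A u v (\<i> * of_real (real n))) * FF A v b (- (\<i> * of_real (real n)))) \<le> \<delta>"
        unfolding norm_mult using mult_mono[OF less_imp_le[OF D[of u v]] nb] dpos by simp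
    qed
    also have "\<dots> = N * \<delta>" unfolding N_def by simp
    finally have "norm (FF A u b (\<i> * of_real T) - FF A u b 0) \<le> N * \<delta>" .
    then show "norm ((FF A u b (\<i> * of_real T) - FF A u b 0) * x b) \<le> N * \<delta> * norm (x b)"
      unfolding norm_mult by (rule mult_right_mono) simp
  qed
  also have "\<dots> = N * \<delta> * X" unfolding X_def by (simp add: sum_distrib_left)
  also have "\<dots> < c"
  proof -
    have "N + N * X > 0" using Npos Xnn by (simp add: add_pos_nonneg)
    then have "N * \<delta> = c / (X + 1)" unfolding \<delta>_def using Npos Xnn by (simp add: field_simps)
    then have "N * \<delta> * X = c * (X / (X + 1))" by simp
    also have "\<dots> < c * 1" using cpos Xnn by (intro mult_strict_left_mono) auto
    finally show ?thesis by simp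
  qed
  finally have "norm (H (\<i> * of_real T) - H 0) < c" .
  moreover have "\<bar>G T - G 0\<bar> \<le> norm (H (\<i> * of_real T) - H 0)"
    unfolding G_def using abs_Im_le_cmod[of "H (\<i> * of_real T) - H 0"] by simp
  ultimately show False using GT[OF T1] by simp
qed


theorem theorem20:
  fixes E :: "'n::finite \<Rightarrow> 'n \<Rightarrow> bool" and w :: "'n set \<Rightarrow> real"
  assumes "simple_graph E" and "graph_connected E" and "bipartite E"
    and "unique_perfect_matching E"
    and "\<forall>u v. E u v \<longrightarrow> w {u, v} \<noteq> 0"
  shows "\<forall>u. \<not> sedentary (weighted_adj E w) u"
proof
  fix u
  let ?A = "weighted_adj E w"
  have symE: "\<And>i j. E i j \<Longrightarrow> E j i" using assms(1) unfolding simple_graph_def by auto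
  have sym: "?A $ i $ j = ?A $ j $ i" for i j
    unfolding weighted_adj_def using symE by (auto simp: insert_commute)
  obtain S where S: "\<forall>u v. E u v \<longrightarrow> (u \<in> S \<longleftrightarrow> v \<notin> S)"
    using assms(3) unfolding bipartite_def by blast
  have bip: "?A $ i $ j \<noteq> 0 \<Longrightarrow> (i \<in> S \<longleftrightarrow> j \<notin> S)" for i j
    using S unfolding weighted_adj_def by (auto split: if_splits)
  have "det ?A \<noteq> 0" by (rule det_nonzero[OF assms(1,3,4,5)])
  then have "invertible ?A" by (simp add: invertible_det_nz)
  then obtain B where AB: "?A ** B = mat 1" using invertible_right_inverse by blast
  show "\<not> sedentary ?A u" by (rule core[OF sym bip AB])
qed

end
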